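(* Assume Evidential Independence. Then for every evidence partition $\mathcal{E}$ (and choice set $\mathcal{S}$ with a unique post-learning optimal action in each state), $\mathrm{Val}_{General}(\mathcal{E})\le \mathrm{Val}_{Good}(\mathcal{E})$.
   Context: Standing setup: $\Omega$ is a finite set of states; $p$ is a probability function on $\Omega$; $u:\mathscr{O}\to\mathbb{R}$ a utility function on outcomes; actions are functions $f:\Omega\to\mathscr{O}$; for a probability $q$, $\mathbb{E}_q(f)=\sum_{\omega} q(\{\omega\})u(f(\omega))$. $\mathcal{S}$ is a finite choice set of actions; $\mathcal{E}$ is a partition of $\Omega$ with $p(E)>0$ for all $E\in\mathcal{E}$, and $p(\cdot\mid E)$ is ratio conditional probability. An update rule assigns to each $E\in\mathcal{E}$ a map $\mathcal{P}_E:E\to\Delta(\Omega)$ (probability functions on $\Omega$) with $\mathcal{P}_E(\omega)(E)=1$; $\mathcal{P}_{\mathcal{E}}(\omega)=\mathcal{P}_E(\omega)$ for $\omega\in E$. Standing assumption: for each $\omega$ there is a unique $f^*_\omega\in\mathcal{S}$ maximizing $\mathbb{E}_{\mathcal{P}_{\mathcal{E}}(\omega)}(\cdot)$ over $\mathcal{S}$. Definitions: $\mathrm{Val}_{Good}(\mathcal{E})=\sum_{E\in\mathcal{E}}p(E)\max_{f\in\mathcal{S}}\mathbb{E}_{p(\cdot\mid E)}(f)-\max_{f\in\mathcal{S}}\mathbb{E}_p(f)$; $\mathrm{Val}_{General}(\mathcal{E})=\sum_{\omega\in\Omega}p(\{\omega\})u(f^*_\omega(\omega))-\max_{f\in\mathcal{S}}\mathbb{E}_p(f)$.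 Evidential Independence: for every $E\in\mathcal{E}$, every $f\in\mathcal{S}$ and every $g\in\mathcal{S}$ with $p(C_g)>0$ where $C_g=\{\omega\in E: f^*_\omega=g\}$, one has $\mathbb{E}_{p(\cdot\mid C_g)}(f)=\mathbb{E}_{p(\cdot\mid E)}(f)$. *)

theory Defs
  imports Main "HOL-Library.Extended_Real"
begin

definition is_prob :: "('w::finite \<Rightarrow> real) \<Rightarrow> bool" where
  "is_prob q \<longleftrightarrow> (\<forall>w. 0 \<le> q w) \<and> (\<Sum>w\<in>UNIV. q w) = 1"

definition Pr :: "('w \<Rightarrow> real) \<Rightarrow> 'w set \<Rightarrow> real" where
  "Pr q A = (\<Sum>w\<in>A. q w)"

definition Exp :: "('w::finite \<Rightarrow> real) \<Rightarrow> ('o \<Rightarrow> real) \<Rightarrow> ('w \<Rightarrow> 'o) \<Rightarrow> real" where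
  "Exp q u f = (\<Sum>w\<in>UNIV. q w * u (f w))"

definition cond :: "('w \<Rightarrow> real) \<Rightarrow> 'w set \<Rightarrow> ('w \<Rightarrow> real)" where
  "cond p A = (\<lambda>w. if w \<in> A then p w / Pr p A else 0)"

definition is_partition :: "'w set set \<Rightarrow> bool" where
  "is_partition Es \<longleftrightarrow> (\<forall>E\<in>Es. E \<noteq> {}) \<and> \<Union>Es = UNIV \<and>
     (\<forall>E\<in>Es. \<forall>F\<in>Es. E \<noteq> F \<longrightarrow> E \<inter> F = {})"

definition cell :: "'w set set \<Rightarrow> 'w \<Rightarrow> 'w set" where
  "cell Es w = (THE E. E \<in> Es \<and> w \<in> E)"

(* update rule: P E w is the posterior P_E(w); P_{\<E>}(w) = P_E(w) for w \<in> E *)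
definition is_update_rule :: "'w set set \<Rightarrow> ('w set \<Rightarrow> 'w \<Rightarrow> ('w::finite \<Rightarrow> real)) \<Rightarrow> bool" where
  "is_update_rule Es P \<longleftrightarrow> (\<forall>E\<in>Es. \<forall>w\<in>E. is_prob (P E w) \<and> Pr (P E w) E = 1)"

definition PEs :: "'w set set \<Rightarrow> ('w set \<Rightarrow> 'w \<Rightarrow> ('w \<Rightarrow> real)) \<Rightarrow> 'w \<Rightarrow> ('w \<Rightarrow> real)" where
  "PEs Es P w = P (cell Es w) w"

definition is_opt :: "('w::finite \<Rightarrow> real) \<Rightarrow> ('o \<Rightarrow> real) \<Rightarrow> ('w \<Rightarrow> 'o) set \<Rightarrow> ('w \<Rightarrow> 'o) \<Rightarrow> bool" where
  "is_opt q u S f \<longleftrightarrow> f \<in> S \<and> (\<forall>g\<in>S. Exp q u g \<le> Exp q u f)"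

definition unique_opt :: "'w set set \<Rightarrow> ('w set \<Rightarrow> 'w \<Rightarrow> ('w::finite \<Rightarrow> real)) \<Rightarrow> ('o \<Rightarrow> real) \<Rightarrow> ('w \<Rightarrow> 'o) set \<Rightarrow> bool" where
  "unique_opt Es P u S \<longleftrightarrow> (\<forall>w. \<exists>!f. is_opt (PEs Es P w) u S f)"

definition fstar :: "'w set set \<Rightarrow> ('w set \<Rightarrow> 'w \<Rightarrow> ('w::finite \<Rightarrow> real)) \<Rightarrow> ('o \<Rightarrow> real) \<Rightarrow> ('w \<Rightarrow> 'o) set \<Rightarrow> 'w \<Rightarrow> ('w \<Rightarrow> 'o)" where
  "fstar Es P u S w = (THE f. is_opt (PEs Es P w) u S f)"

definition Val_Good :: "('w::finite \<Rightarrow> real) \<Rightarrow> ('o \<Rightarrow> real) \<Rightarrow> ('w \<Rightarrow> 'o) set \<Rightarrow> 'w set set \<Rightarrow> real" where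
  "Val_Good p u S Es = (\<Sum>E\<in>Es. Pr p E * Max ((\<lambda>f. Exp (cond p E) u f) ` S))
                        - Max ((\<lambda>f. Exp p u f) ` S)"

definition Val_General :: "('w::finite \<Rightarrow> real) \<Rightarrow> ('o \<Rightarrow> real) \<Rightarrow> ('w \<Rightarrow> 'o) set \<Rightarrow> 'w set set
      \<Rightarrow> ('w set \<Rightarrow> 'w \<Rightarrow> ('w \<Rightarrow> real)) \<Rightarrow> real" where
  "Val_General p u S Es P = (\<Sum>w\<in>UNIV. p w * u (fstar Es P u S w w)) - Max ((\<lambda>f. Exp p u f) ` S)"

definition evidential_independence :: "('w::finite \<Rightarrow> real) \<Rightarrow> ('o \<Rightarrow> real) \<Rightarrow> ('w \<Rightarrow> 'o) set \<Rightarrow> 'w set set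
      \<Rightarrow> ('w set \<Rightarrow> 'w \<Rightarrow> ('w \<Rightarrow> real)) \<Rightarrow> bool" where
  "evidential_independence p u S Es P \<longleftrightarrow>
     (\<forall>E\<in>Es. \<forall>f\<in>S. \<forall>g\<in>S.
        let C = {w\<in>E. fstar Es P u S w = g} in
        Pr p C > 0 \<longrightarrow> Exp (cond p C) u f = Exp (cond p E) u f)"

end

theory Submission
  imports Defs
begin

lemma sum_cond_eq:
  fixes p :: "'w::finite \<Rightarrow> real"
  assumes "Pr p C > 0"
  shows "(\<Sum>w\<in>C. p w * u (g w)) = Pr p C * Exp (cond p C) u g"
proof -
  have "Exp (cond p C) u g = (\<Sum>w\<in>UNIV. (if w \<in> C then p w * u (g w) / Pr p C else 0))"
    unfolding Exp_def cond_def by (rule sum.cong) auto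
  also have "\<dots> = (\<Sum>w\<in>C. p w * u (g w) / Pr p C)"
    by (simp add: sum.If_cases)
  also have "\<dots> = (\<Sum>w\<in>C. p w * u (g w)) / Pr p C"
    by (simp add: sum_divide_distrib)
  finally show ?thesis using assms by simp
qed

theorem theorem3:
  fixes p :: "'w::finite \<Rightarrow> real" and u :: "'o \<Rightarrow> real"
    and S :: "('w \<Rightarrow> 'o) set" and Es :: "'w set set"
    and P :: "'w set \<Rightarrow> 'w \<Rightarrow> ('w \<Rightarrow> real)"
  assumes "is_prob p"
    and "finite S" and "S \<noteq> {}"
    and "is_partition Es" and "\<forall>E\<in>Es. Pr p E > 0"
    and "is_update_rule Es P"
    and "unique_opt Es P u S"
    and "evidential_independence p u S Es P"
  shows "Val_General p u S Es P \<le> Val_Good p u S Es"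
proof -
  define fs where "fs = fstar Es P u S"
  have pnn: "\<And>w. 0 \<le> p w" using assms(1) unfolding is_prob_def by auto
  have fsS: "fs w \<in> S" for w
  proof -
    have "\<exists>!f. is_opt (PEs Es P w) u S f" using assms(7) unfolding unique_opt_def by auto
    hence "is_opt (PEs Es P w) u S (fs w)" unfolding fs_def fstar_def by (rule theI')
    thus ?thesis unfolding is_opt_def by auto
  qed
  define M where "M E = Max ((\<lambda>f. Exp (cond p E) u f) ` S)" for E
  have cell_bound: "(\<Sum>w\<in>E. p w * u (fs w w)) \<le> Pr p E * M E" if EE: "E \<in> Es" for E
  proof -
    have "(\<Sum>w\<in>E. p w * u (fs w w)) = (\<Sum>g\<in>fs ` E. \<Sum>w\<in>{x\<in>E. fs x = g}. p w * u (fs w w))"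
      by (rule sum.image_gen) simp
    also have "\<dots> = (\<Sum>g\<in>fs ` E. \<Sum>w\<in>{x\<in>E. fs x = g}. p w * u (g w))"
      by (intro sum.cong refl) auto
    also have "\<dots> \<le> (\<Sum>g\<in>fs ` E. Pr p {x\<in>E. fs x = g} * M E)"
    proof (rule sum_mono)
      fix g assume g: "g \<in> fs ` E"
      hence gS: "g \<in> S" using fsS by auto
      define C where "C = {x\<in>E. fs x = g}"
      have Cnn: "0 \<le> Pr p C" unfolding Pr_def using pnn by (simp add: sum_nonneg)
      show "(\<Sum>w\<in>{x\<in>E. fs x = g}. p w * u (g w)) \<le> Pr p {x\<in>E. fs x = g} * M E"
        unfolding C_def[symmetric]
      proof (cases "Pr p C > 0")
        case True
        have "Exp (cond p C) u g = Exp (cond p E) u g"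
          using assms(8) EE gS True unfolding evidential_independence_def C_def fs_def Let_def
          by blast
        moreover have "Exp (cond p E) u g \<le> M E"
          unfolding M_def using assms(2) gS by (intro Max_ge) auto
        ultimately show "(\<Sum>w\<in>C. p w * u (g w)) \<le> Pr p C * M E"
          using sum_cond_eq[OF True, of u g] True by (simp add: mult_left_mono)
      next
        case False
        hence z: "Pr p C = 0" using Cnn by simp
        hence "\<forall>w\<in>C. p w = 0" unfolding Pr_def using pnn
          by (subst (asm) sum_nonneg_eq_0_iff) auto
        thus "(\<Sum>w\<in>C. p w * u (g w)) \<le> Pr p C * M E" using z by simp
      qed
    qed
    also have "\<dots> = (\<Sum>g\<in>fs ` E. Pr p {x\<in>E. fs x = g}) * M E"
      by (simp add: sum_distrib_right)
    also have "(\<Sum>g\<in>fs ` E. Pr p {x\<in>E. fs x = g}) = Pr p E"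
      unfolding Pr_def by (rule sum.image_gen[symmetric]) simp
    finally show ?thesis .
  qed
  have finEs: "finite Es" by (rule finite_subset[of _ "Pow UNIV"]) auto
  have "(\<Sum>w\<in>UNIV. p w * u (fs w w)) = (\<Sum>w\<in>\<Union>Es. p w * u (fs w w))"
    using assms(4) unfolding is_partition_def by simp
  also have "\<dots> = (\<Sum>E\<in>Es. \<Sum>w\<in>E. p w * u (fs w w))"
    using assms(4) finEs unfolding is_partition_def
    using sum.Union_disjoint[of Es "\<lambda>w. p w * u (fs w w)"] by auto
  also have "\<dots> \<le> (\<Sum>E\<in>Es. Pr p E * M E)"
    by (rule sum_mono) (rule cell_bound)
  finally show ?thesis
    unfolding Val_General_def Val_Good_def M_def fs_def by simp
qed

end
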